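(* In the EnSolver setting described in the context (ensemble of $M$ base models, output domain of size $N_{\mathcal{S}}$, threshold $\tau$ with $M(1-\tau)$ a positive integer, and assumptions of independence and (A1)–(A3)), the correct prediction rate of the EnSolver $m$ satisfies $$p\left( m(x) = s_x \right) > \alpha \sum_{i=k}^{M}\binom{M}{i}\beta_{\text{min}}^i (1-\beta_{\text{max}})^{M-i} - \alpha\, \mathcal{E}(M, N_{\mathcal{S}}, \tau),$$ where $k = M(1-\tau) + 1$ and $x \sim p$.
   Context: Setting: $\mathcal{S}$ is a finite set of output strings with $N_{\mathcal{S}} = |\mathcal{S}| \ge 2$; inputs $x \in \mathcal{X}$ are drawn from a probability distribution $p$ on $\mathcal{X}$, each $x$ having a single correct output $s_x \in \mathcal{S}$. $\mathcal{X}$ is the disjoint union of the in-distribution set $\mathcal{X}^{\text{in}}$ and the out-of-distribution set $\mathcal{X}^{\text{out}}$, and $\alpha = p(x \in \mathcal{X}^{\text{in}})$. An ensemble consists of $M$ base models $m_1, \dots, m_M$, each of which produces a (random) prediction $m_i(x) \in \mathcal{S}$ on input $x$; probabilities are taken jointly over $x \sim p$ and the predictions, and the base models make their predictions independently of each other given the input (in particular conditionally on $x \in \mathcal{X}^{\text{in}}$ and conditionally on $x \in \mathcal{X}^{\text{out}}$). Let $\beta_i = p(m_i(x) = s_x \mid x \in \mathcal{X}^{\text{in}})$, $\beta_{\text{min}} = \min_i \beta_i$, $\beta_{\text{max}} = \max_i \beta_i$. Assumptions: (A1) $\beta_{\text{min}} > 1/N_{\mathcal{S}}$; (A2) for each $i$,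 conditionally on $x \in \mathcal{X}^{\text{in}}$, $m_i(x)$ equals each incorrect string $s \neq s_x$ with probability $(1-\beta_i)/(N_{\mathcal{S}}-1)$; (A3) for each $i$, conditionally on $x \in \mathcal{X}^{\text{out}}$, $m_i(x)$ equals each $s \in \mathcal{S}$ with probability $1/N_{\mathcal{S}}$. For $x$ and $s \in \mathcal{S}$, $n(x,s)$ is the number of base models with $m_i(x) = s$. The threshold $\tau \in (0,1]$ is such that $M(1-\tau)$ is a positive integer. The EnSolver $m$ acts as follows on input $x$: let $p_{\max} = \max_{s} n(x,s)/M$ and uncertainty $u = 1 - p_{\max}$; if $u < \tau$ it outputs a string $y$ maximizing $n(x,\cdot)$, otherwise it outputs a special skip symbol $s_{\text{skip}}$. The out-of-distribution error bound is $\mathcal{E}(M, N_{\mathcal{S}}, \tau) = \binom{M}{\lfloor M/2 \rfloor} (N_{\mathcal{S}})^{-M(1-\tau)}$. *)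

theory Defs
  imports "HOL-Probability.Probability"
begin

text \<open>Given x, model i predicts according to the pmf pred i x, independently of the
  other models (product pmf over the indices 0..M-1).\<close>
definition joint :: "nat \<Rightarrow> 'x pmf \<Rightarrow> (nat \<Rightarrow> 'x \<Rightarrow> 's pmf) \<Rightarrow> ('x \<times> (nat \<Rightarrow> 's)) pmf" where
  "joint M p pred =
     bind_pmf p (\<lambda>x. map_pmf (\<lambda>ys. (x, ys)) (Pi_pmf {..<M} undefined (\<lambda>i. pred i x)))"

definition alpha_in :: "'x pmf \<Rightarrow> 'x set \<Rightarrow> real" where
  "alpha_in p Xin = measure_pmf.prob p Xin"

definition beta_acc ::
  "nat \<Rightarrow> 'x pmf \<Rightarrow> (nat \<Rightarrow> 'x \<Rightarrow> 's pmf) \<Rightarrow> 'x set \<Rightarrow> ('x \<Rightarrow> 's) \<Rightarrow> nat \<Rightarrow> real" where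
  "beta_acc M p pred Xin sx i =
     measure_pmf.prob (joint M p pred) {(x, ys). x \<in> Xin \<and> ys i = sx x} / alpha_in p Xin"

definition votes :: "nat \<Rightarrow> (nat \<Rightarrow> 's) \<Rightarrow> 's \<Rightarrow> nat" where
  "votes M ys s = card {i. i < M \<and> ys i = s}"

definition pmax :: "nat \<Rightarrow> 's set \<Rightarrow> (nat \<Rightarrow> 's) \<Rightarrow> real" where
  "pmax M S ys = Max ((\<lambda>s. real (votes M ys s) / real M) ` S)"

text \<open>EnSolver output; None is the skip symbol; y is the chosen maximiser of votes.\<close>
definition ensolver :: "nat \<Rightarrow> 's set \<Rightarrow> real \<Rightarrow> 's \<Rightarrow> (nat \<Rightarrow> 's) \<Rightarrow> 's option" where
  "ensolver M S \<tau> y ys = (if 1 - pmax M S ys < \<tau> then Some y else None)"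

definition ood_err_bound :: "nat \<Rightarrow> nat \<Rightarrow> real \<Rightarrow> real" where
  "ood_err_bound M N \<tau> = real (M choose (M div 2)) * real N powr (- (real M * (1 - \<tau>)))"

end

theory Submission
  imports Defs
begin

lemma measure_bind_pmf_real:
  "measure_pmf.prob (bind_pmf M N) X = (\<integral>x. measure_pmf.prob (N x) X \<partial>M)"
proof -
  have "emeasure (measure_pmf (bind_pmf M N)) X = (\<integral>\<^sup>+x. emeasure (measure_pmf (N x)) X \<partial>M)"
    by (rule emeasure_bind_pmf)
  also have "\<dots> = (\<integral>\<^sup>+x. ennreal (measure_pmf.prob (N x) X) \<partial>M)"
    by (simp add: measure_pmf.emeasure_eq_measure)
  also have "\<dots> = ennreal (\<integral>x. measure_pmf.prob (N x) X \<partial>M)"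
    by (rule nn_integral_eq_integral) (auto intro!: measure_pmf.integrable_const_bound[where B=1])
  finally show ?thesis
    by (simp add: measure_pmf.emeasure_eq_measure integral_nonneg_AE)
qed

lemma sum_subsets_card:
  fixes f :: "nat \<Rightarrow> real"
  assumes "k \<le> M"
  shows "(\<Sum>A\<in>{A. A \<subseteq> {..<M} \<and> k \<le> card A}. f (card A)) = (\<Sum>i=k..M. real (M choose i) * f i)"
proof -
  have fin: "finite {A. A \<subseteq> {..<M} \<and> k \<le> card A}" by auto
  have "(\<Sum>A\<in>{A. A \<subseteq> {..<M} \<and> k \<le> card A}. f (card A)) =
     (\<Sum>i=k..M. \<Sum>A\<in>{A \<in> {A. A \<subseteq> {..<M} \<and> k \<le> card A}. card A = i}. f (card A))"
    apply (rule sum.group[symmetric])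
    using fin apply auto
    by (metis card_lessThan card_mono finite_lessThan)
  also have "\<dots> = (\<Sum>i=k..M. real (M choose i) * f i)"
  proof (rule sum.cong[OF refl])
    fix i assume "i \<in> {k..M}"
    then have eq: "{A \<in> {A. A \<subseteq> {..<M} \<and> k \<le> card A}. card A = i} = {A. A \<subseteq> {..<M} \<and> card A = i}"
      by auto
    show "(\<Sum>A\<in>{A \<in> {A. A \<subseteq> {..<M} \<and> k \<le> card A}. card A = i}. f (card A)) = real (M choose i) * f i"
      unfolding eq using n_subsets[of "{..<M}" i] by simp
  qed
  finally show ?thesis .
qed

lemma pb_lower:
  fixes q :: "nat \<Rightarrow> 's pmf" and b :: "nat \<Rightarrow> real"
  assumes b: "\<And>i. i < M \<Longrightarrow> pmf (q i) t = b i"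
    and lohi: "\<And>i. i < M \<Longrightarrow> lo \<le> b i \<and> b i \<le> hi" and "0 \<le> lo" "hi \<le> 1" and "k \<le> M"
  shows "measure_pmf.prob (Pi_pmf {..<M} d q) {ys. k \<le> card {i. i < M \<and> ys i = t}}
         \<ge> (\<Sum>i=k..M. real (M choose i) * lo ^ i * (1 - hi) ^ (M - i))"
proof -
  define AA where "AA = {A. A \<subseteq> {..<M} \<and> k \<le> card A}"
  define E where "E A = Pi {..<M} (\<lambda>i. if i \<in> A then {t} else - {t})" for A
  have finAA: "finite AA" unfolding AA_def by auto
  have Ecard: "{i. i < M \<and> ys i = t} = A" if "ys \<in> E A" "A \<subseteq> {..<M}" for ys A
    using that unfolding E_def Pi_def by (auto split: if_splits)
  have sub: "(\<Union>A\<in>AA. E A) \<subseteq> {ys. k \<le> card {i. i < M \<and> ys i = t}}"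
    using Ecard unfolding AA_def by auto
  have disj: "disjoint_family_on E AA"
    unfolding disjoint_family_on_def AA_def
  proof (intro ballI impI)
    fix A B assume A: "A \<in> {A. A \<subseteq> {..<M} \<and> k \<le> card A}" and B: "B \<in> {A. A \<subseteq> {..<M} \<and> k \<le> card A}" and "A \<noteq> B"
    show "E A \<inter> E B = {}"
    proof (rule ccontr)
      assume "E A \<inter> E B \<noteq> {}"
      then obtain ys where "ys \<in> E A" "ys \<in> E B" by auto
      then have "{i. i < M \<and> ys i = t} = A" "{i. i < M \<and> ys i = t} = B" using Ecard[of ys A] Ecard[of ys B] A B by blast+
      then show False using \<open>A \<noteq> B\<close> by simp
    qed
  qed
  have "measure_pmf.prob (Pi_pmf {..<M} d q) (\<Union>A\<in>AA. E A) = (\<Sum>A\<in>AA. measure_pmf.prob (Pi_pmf {..<M} d q) (E A))"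
    by (rule measure_pmf.finite_measure_finite_Union[OF finAA _ disj]) auto
  also have "\<dots> \<ge> (\<Sum>A\<in>AA. lo ^ card A * (1 - hi) ^ (M - card A))"
  proof (rule sum_mono)
    fix A assume A: "A \<in> AA"
    then have Asub: "A \<subseteq> {..<M}" unfolding AA_def by auto
    have "measure_pmf.prob (Pi_pmf {..<M} d q) (E A) =
          (\<Prod>i\<in>{..<M}. measure_pmf.prob (q i) (if i \<in> A then {t} else - {t}))"
      unfolding E_def by (rule measure_Pi_pmf_Pi) simp
    also have "\<dots> = (\<Prod>i\<in>{..<M}. if i \<in> A then b i else 1 - b i)"
    proof (rule prod.cong[OF refl])
      fix i assume i: "i \<in> {..<M}"
      have "measure_pmf.prob (q i) (- {t}) = 1 - measure_pmf.prob (q i) {t}"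
        using measure_pmf.prob_compl[of "{t}" "q i"] by (simp add: Compl_eq_Diff_UNIV)
      then show "measure_pmf.prob (q i) (if i \<in> A then {t} else - {t}) = (if i \<in> A then b i else 1 - b i)"
        using i by (simp add: measure_pmf_single b)
    qed
    also have "\<dots> = (\<Prod>i\<in>{..<M} \<inter> {i. i \<in> A}. b i) * (\<Prod>i\<in>{..<M} \<inter> - {i. i \<in> A}. 1 - b i)"
      by (rule prod.If_cases) simp
    also have "\<dots> \<ge> (\<Prod>i\<in>{..<M} \<inter> {i. i \<in> A}. lo) * (\<Prod>i\<in>{..<M} \<inter> - {i. i \<in> A}. 1 - hi)"
      apply (intro mult_mono prod_mono prod_nonneg)
      using lohi assms(3,4) by (auto; smt (verit))+
    also have "(\<Prod>i\<in>{..<M} \<inter> {i. i \<in> A}. lo) * (\<Prod>i\<in>{..<M} \<inter> - {i. i \<in> A}. 1 - hi) = lo ^ card A * (1 - hi) ^ (M - card A)"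
    proof -
      have "{..<M} \<inter> {i. i \<in> A} = A" using Asub by auto
      moreover have "{..<M} \<inter> - {i. i \<in> A} = {..<M} - A" by auto
      moreover have "card ({..<M} - A) = M - card A" using Asub by (simp add: card_Diff_subset finite_subset)
      ultimately show ?thesis by simp
    qed
    finally show "lo ^ card A * (1 - hi) ^ (M - card A) \<le> measure_pmf.prob (Pi_pmf {..<M} d q) (E A)" .
  qed
  also have "(\<Sum>A\<in>AA. lo ^ card A * (1 - hi) ^ (M - card A)) = (\<Sum>i=k..M. real (M choose i) * (lo ^ i * (1 - hi) ^ (M - i)))"
    unfolding AA_def by (rule sum_subsets_card[OF assms(5)])
  finally have "(\<Sum>i=k..M. real (M choose i) * (lo ^ i * (1 - hi) ^ (M - i))) \<le> measure_pmf.prob (Pi_pmf {..<M} d q) {ys. k \<le> card {i. i < M \<and> ys i = t}}"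
    using measure_pmf.finite_measure_mono[OF sub, of "Pi_pmf {..<M} d q"] by simp
  then show ?thesis by (simp add: mult.assoc)
qed

lemma wrong_upper:
  fixes q :: "nat \<Rightarrow> 's pmf"
  assumes r: "\<And>i. i < M \<Longrightarrow> pmf (q i) s \<le> r" and "0 \<le> r"
  shows "measure_pmf.prob (Pi_pmf {..<M} d q) {ys. k \<le> card {i. i < M \<and> ys i = s}} \<le> real (M choose k) * r ^ k"
proof -
  define AA where "AA = {A. A \<subseteq> {..<M} \<and> card A = k}"
  define E where "E A = Pi {..<M} (\<lambda>i. if i \<in> A then {s} else UNIV)" for A
  have sub: "{ys. k \<le> card {i. i < M \<and> ys i = s}} \<subseteq> (\<Union>A\<in>AA. E A)"
  proof
    fix ys assume "ys \<in> {ys. k \<le> card {i. i < M \<and> ys i = s}}"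
    then have "k \<le> card {i. i < M \<and> ys i = s}" by simp
    then obtain A where "A \<subseteq> {i. i < M \<and> ys i = s}" "card A = k"
      by (meson obtain_subset_with_card_n)
    then have "A \<in> AA" "ys \<in> E A" unfolding AA_def E_def by auto
    then show "ys \<in> (\<Union>A\<in>AA. E A)" by blast
  qed
  have "measure_pmf.prob (Pi_pmf {..<M} d q) {ys. k \<le> card {i. i < M \<and> ys i = s}}
     \<le> measure_pmf.prob (Pi_pmf {..<M} d q) (\<Union>A\<in>AA. E A)"
    by (rule measure_pmf.finite_measure_mono[OF sub]) simp
  also have "\<dots> \<le> (\<Sum>A\<in>AA. measure_pmf.prob (Pi_pmf {..<M} d q) (E A))"
    by (rule measure_pmf.finite_measure_subadditive_finite) (auto simp: AA_def)
  also have "\<dots> \<le> (\<Sum>A\<in>AA. r ^ k)"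
  proof (rule sum_mono)
    fix A assume A: "A \<in> AA"
    then have Asub: "A \<subseteq> {..<M}" and cA: "card A = k" unfolding AA_def by auto
    have "measure_pmf.prob (Pi_pmf {..<M} d q) (E A) =
          (\<Prod>i\<in>{..<M}. measure_pmf.prob (q i) (if i \<in> A then {s} else UNIV))"
      unfolding E_def by (rule measure_Pi_pmf_Pi) simp
    also have "\<dots> = (\<Prod>i\<in>{..<M}. if i \<in> A then pmf (q i) s else 1)"
      by (rule prod.cong[OF refl]) (auto simp: measure_pmf_single)
    also have "\<dots> = (\<Prod>i\<in>A. pmf (q i) s)"
      using Asub by (simp add: prod.If_cases Int_absorb1)
    also have "\<dots> \<le> (\<Prod>i\<in>A. r)"
      by (rule prod_mono) (use Asub r in auto)
    finally show "measure_pmf.prob (Pi_pmf {..<M} d q) (E A) \<le> r ^ k" using cA by simp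
  qed
  also have "\<dots> = real (M choose k) * r ^ k"
    unfolding AA_def using n_subsets[of "{..<M}" k] by simp
  finally show ?thesis .
qed

lemma per_x:
  fixes q :: "nat \<Rightarrow> 's pmf" and b :: "nat \<Rightarrow> real" and sel :: "(nat \<Rightarrow> 's) \<Rightarrow> 's" and t :: 's and S :: "'s set"
  assumes S_fin: "finite S" and tS: "t \<in> S"
    and b: "\<And>i. i < M \<Longrightarrow> pmf (q i) t = b i"
    and lohi: "\<And>i. i < M \<Longrightarrow> lo \<le> b i \<and> b i \<le> hi" and lo0: "0 \<le> lo" and hi1: "hi \<le> 1"
    and r: "\<And>i s. i < M \<Longrightarrow> s \<in> S \<Longrightarrow> s \<noteq> t \<Longrightarrow> pmf (q i) s \<le> r" and r0: "0 \<le> r"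
    and qS: "\<And>i. i < M \<Longrightarrow> measure_pmf.prob (q i) S = 1"
    and K: "0 < K" "real M * (1 - \<tau>) = real K" and tau: "0 < \<tau>"
    and sel_max: "\<forall>ys. (\<forall>i < M. ys i \<in> S) \<longrightarrow>
               sel ys \<in> S \<and> (\<forall>s \<in> S. votes M ys s \<le> votes M ys (sel ys))"
  shows "measure_pmf.prob (Pi_pmf {..<M} d q) {ys. ensolver M S \<tau> (sel ys) ys = Some t}
    \<ge> (\<Sum>i=K+1..M. real (M choose i) * lo ^ i * (1 - hi) ^ (M - i))
       - real (card S - 1) * (real (M choose (K+1)) * r ^ (K+1))"
proof -
  define Q where "Q = Pi_pmf {..<M} d q"
  define C where "C = {ys. ensolver M S \<tau> (sel ys) ys = Some t}"
  define Aev where "Aev = {ys. K+1 \<le> card {i. i < M \<and> ys i = t}}"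
  define D where "D = Pi {..<M} (\<lambda>_. S)"
  define Bs where "Bs (s::'s) = {ys :: nat \<Rightarrow> 's. K+1 \<le> card {i. i < M \<and> ys i = s}}" for s
  have Mpos: "0 < M"
  proof (rule ccontr)
    assume "\<not> 0 < M" then have "M = 0" by simp
    then show False using K by simp
  qed
  have KM: "K + 1 \<le> M"
  proof -
    have "real K < real M" using K tau Mpos by (smt (verit) mult_less_cancel_left2 of_nat_0_less_iff)
    then show ?thesis by simp
  qed
  have PA: "measure_pmf.prob Q Aev \<ge> (\<Sum>i=K+1..M. real (M choose i) * lo ^ i * (1 - hi) ^ (M - i))"
    unfolding Q_def Aev_def by (rule pb_lower[OF b lohi lo0 hi1 KM])
  have PD: "measure_pmf.prob Q D = 1"
    unfolding Q_def D_def by (subst measure_Pi_pmf_Pi) (auto simp: qS)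
  have PnD: "measure_pmf.prob Q (- D) = 0"
    using measure_pmf.prob_compl[of D Q] PD by (simp add: Compl_eq_Diff_UNIV)
  have PB: "measure_pmf.prob Q (Bs s) \<le> real (M choose (K+1)) * r ^ (K+1)" if "s \<in> S" "s \<noteq> t" for s
    unfolding Q_def Bs_def by (rule wrong_upper) (use r r0 that in auto)
  have cover: "Aev \<subseteq> C \<union> (- D \<union> (\<Union>s\<in>S - {t}. Bs s))"
  proof
    fix ys assume yA: "ys \<in> Aev"
    show "ys \<in> C \<union> (- D \<union> (\<Union>s\<in>S - {t}. Bs s))"
    proof (cases "ys \<in> D \<and> (\<forall>s\<in>S - {t}. ys \<notin> Bs s)")
      case True
      then have allS: "\<forall>i<M. ys i \<in> S" unfolding D_def by auto
      with sel_max have selS: "sel ys \<in> S" and selmax: "\<forall>s \<in> S. votes M ys s \<le> votes M ys (sel ys)" by auto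
      have vt: "K + 1 \<le> votes M ys t" using yA unfolding Aev_def votes_def by simp
      have "sel ys = t"
      proof (rule ccontr)
        assume "sel ys \<noteq> t"
        then have "ys \<notin> Bs (sel ys)" using True selS by auto
        then have "votes M ys (sel ys) < K + 1" unfolding Bs_def votes_def by simp
        with selmax tS vt show False by force
      qed
      moreover have "1 - pmax M S ys < \<tau>"
      proof -
        have "real (votes M ys t) / real M \<le> pmax M S ys"
          unfolding pmax_def using S_fin tS by (intro Max_ge) auto
        moreover have "real (K+1) / real M \<le> real (votes M ys t) / real M"
          using vt by (simp add: divide_right_mono)
        moreover have "1 - \<tau> < real (K+1) / real M"
        proof -
          have "1 - \<tau> = real K / real M" using K Mpos by (simp add: field_simps)
          also have "\<dots> < real (K+1) / real M" using Mpos by (simp add: divide_strict_right_mono)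
          finally show ?thesis .
        qed
        ultimately show ?thesis by linarith
      qed
      ultimately show ?thesis unfolding C_def ensolver_def by simp
    next
      case False
      then show ?thesis by auto
    qed
  qed
  have "measure_pmf.prob Q Aev \<le> measure_pmf.prob Q (C \<union> (- D \<union> (\<Union>s\<in>S - {t}. Bs s)))"
    by (rule measure_pmf.finite_measure_mono[OF cover]) simp
  also have "\<dots> \<le> measure_pmf.prob Q C + measure_pmf.prob Q (- D \<union> (\<Union>s\<in>S - {t}. Bs s))"
    by (rule measure_Un_le) auto
  also have "measure_pmf.prob Q (- D \<union> (\<Union>s\<in>S - {t}. Bs s)) \<le> measure_pmf.prob Q (- D) + measure_pmf.prob Q (\<Union>s\<in>S - {t}. Bs s)"
    by (rule measure_Un_le) auto
  also have "measure_pmf.prob Q (\<Union>s\<in>S - {t}. Bs s) \<le> (\<Sum>s\<in>S - {t}. measure_pmf.prob Q (Bs s))"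
    by (rule measure_pmf.finite_measure_subadditive_finite) (use S_fin in auto)
  also have "\<dots> \<le> (\<Sum>s\<in>S - {t}. real (M choose (K+1)) * r ^ (K+1))"
    by (rule sum_mono) (use PB in auto)
  also have "\<dots> = real (card S - 1) * (real (M choose (K+1)) * r ^ (K+1))"
    using S_fin tS by (simp add: card_Diff_singleton)
  finally show ?thesis using PA PnD unfolding Q_def C_def by linarith
qed

theorem lemma3:
  fixes M N :: nat and \<tau> :: real
    and S :: "'s set" and p :: "'x pmf" and Xin :: "'x set" and sx :: "'x \<Rightarrow> 's"
    and pred :: "nat \<Rightarrow> 'x \<Rightarrow> 's pmf"
    and sel :: "'x \<Rightarrow> (nat \<Rightarrow> 's) \<Rightarrow> 's"
  assumes S_fin: "finite S" and N_def: "N = card S" and N_ge: "N \<ge> 2"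
    and sx_S: "\<forall>x \<in> set_pmf p. sx x \<in> S"
    and alpha_pos: "alpha_in p Xin > 0"
    and tau: "0 < \<tau>" "\<tau> \<le> 1"
    and tau_int: "\<exists>K::nat. K > 0 \<and> real M * (1 - \<tau>) = real K"
    and A1: "\<forall>i < M. beta_acc M p pred Xin sx i > 1 / real N"
    and A2: "\<forall>i < M. \<forall>x \<in> set_pmf p \<inter> Xin. \<forall>s \<in> S. s \<noteq> sx x \<longrightarrow>
               pmf (pred i x) s = (1 - beta_acc M p pred Xin sx i) / (real N - 1)"
    and A3: "\<forall>i < M. \<forall>x \<in> set_pmf p - Xin. \<forall>s \<in> S. pmf (pred i x) s = 1 / real N"
    and sel_max: "\<forall>x ys. (\<forall>i < M. ys i \<in> S) \<longrightarrow>
               sel x ys \<in> S \<and> (\<forall>s \<in> S. votes M ys s \<le> votes M ys (sel x ys))"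
  shows "measure_pmf.prob (joint M p pred)
           {(x, ys). ensolver M S \<tau> (sel x ys) ys = Some (sx x)}
         > alpha_in p Xin *
             (\<Sum>i = nat \<lfloor>real M * (1 - \<tau>)\<rfloor> + 1 .. M.
                real (M choose i)
                * (Min (beta_acc M p pred Xin sx ` {..<M})) ^ i
                * (1 - Max (beta_acc M p pred Xin sx ` {..<M})) ^ (M - i))
           - alpha_in p Xin * ood_err_bound M N \<tau>"
proof -
  obtain K :: nat where K: "0 < K" "real M * (1 - \<tau>) = real K" using tau_int by blast
  have kK: "nat \<lfloor>real M * (1 - \<tau>)\<rfloor> = K" using K by simp
  have Mpos: "0 < M"
  proof (rule ccontr)
    assume "\<not> 0 < M" then have "M = 0" by simp
    then show False using K by simp
  qed
  define \<beta> where "\<beta> = beta_acc M p pred Xin sx"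
  define \<alpha> where "\<alpha> = alpha_in p Xin"
  define Q where "Q x = Pi_pmf {..<M} undefined (\<lambda>i. pred i x)" for x
  define g where "g j x = pmf (pred j x) (sx x)" for j x
  have Nr: "real N \<ge> 2" using N_ge by simp
  have apos: "\<alpha> > 0" using alpha_pos \<alpha>_def by simp
  have aeq: "\<alpha> = measure_pmf.prob p Xin" unfolding \<alpha>_def alpha_in_def ..
  have joint_eq: "measure_pmf.prob (joint M p pred) E = (\<integral>x. measure_pmf.prob (Q x) {ys. (x, ys) \<in> E} \<partial>p)" for E
    unfolding joint_def Q_def measure_bind_pmf_real measure_map_pmf by (simp add: vimage_def)
  have intg: "integrable (measure_pmf p) (\<lambda>x. indicator Xin x * f x)" if "\<And>x. \<bar>f x\<bar> \<le> B" for f :: "'x \<Rightarrow> real" and B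
    by (rule measure_pmf.integrable_const_bound[where B=B]) (use that in \<open>auto simp: indicator_def intro: order_trans[OF abs_ge_zero]\<close>)
  have beta_int: "\<beta> j * \<alpha> = (\<integral>x. indicator Xin x * g j x \<partial>p)" if j: "j < M" for j
  proof -
    have "measure_pmf.prob (joint M p pred) {(x, ys). x \<in> Xin \<and> ys j = sx x}
        = (\<integral>x. indicator Xin x * g j x \<partial>p)"
      unfolding joint_eq
    proof (rule Bochner_Integration.integral_cong[OF refl])
      fix x
      have "measure_pmf.prob (Q x) {ys. ys j = sx x} = measure_pmf.prob (map_pmf (\<lambda>f. f j) (Q x)) {sx x}"
        by (simp add: vimage_def)
      also have "\<dots> = g j x" unfolding Q_def g_def using j
        by (subst Pi_pmf_component) (auto simp: measure_pmf_single)
      finally show "measure_pmf.prob (Q x) {ys. (x, ys) \<in> {(x, ys). x \<in> Xin \<and> ys j = sx x}} = indicator Xin x * g j x"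
        by (cases "x \<in> Xin") auto
    qed
    then show ?thesis unfolding \<beta>_def beta_acc_def \<alpha>_def using apos \<alpha>_def by simp
  qed
  have sumS: "measure_pmf.prob (pred j x) S = g j x + (1 - \<beta> j)"
    if "j < M" "x \<in> set_pmf p" "x \<in> Xin" for j x
  proof -
    have sxS: "sx x \<in> S" using sx_S that by auto
    have "measure_pmf.prob (pred j x) S = (\<Sum>s\<in>S. pmf (pred j x) s)"
      using S_fin by (rule measure_measure_pmf_finite)
    also have "\<dots> = g j x + (\<Sum>s\<in>S - {sx x}. pmf (pred j x) s)"
      unfolding g_def using S_fin sxS by (simp add: sum.remove)
    also have "(\<Sum>s\<in>S - {sx x}. pmf (pred j x) s) = (\<Sum>s\<in>S - {sx x}. (1 - \<beta> j) / (real N - 1))"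
      by (rule sum.cong[OF refl]) (use A2 that in \<open>auto simp: \<beta>_def\<close>)
    also have "\<dots> = 1 - \<beta> j"
      using S_fin sxS Nr by (simp add: card_Diff_singleton N_def[symmetric] of_nat_diff)
    finally show ?thesis .
  qed
  have g_le: "g j x \<le> \<beta> j" if "j < M" "x \<in> set_pmf p" "x \<in> Xin" for j x
    using sumS[OF that] measure_pmf.prob_le_1[of "pred j x" S] by simp
  have g_eq: "g j x = \<beta> j" if j: "j < M" and x: "x \<in> set_pmf p" "x \<in> Xin" for j x
  proof -
    have bnd: "\<bar>\<beta> j - g j y\<bar> \<le> \<bar>\<beta> j\<bar> + 1" for y
      using pmf_le_1[of "pred j y" "sx y"] pmf_nonneg[of "pred j y" "sx y"] unfolding g_def by linarith
    have int0: "(\<integral>y. indicator Xin y * (\<beta> j - g j y) \<partial>p) = 0"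
    proof -
      have "(\<integral>y. indicator Xin y * (\<beta> j - g j y) \<partial>p) = (\<integral>y. indicator Xin y * \<beta> j - indicator Xin y * g j y \<partial>p)"
        by (simp add: algebra_simps)
      also have "\<dots> = (\<integral>y. indicator Xin y * \<beta> j \<partial>p) - (\<integral>y. indicator Xin y * g j y \<partial>p)"
        apply (rule Bochner_Integration.integral_diff)
         apply (rule intg[where B="\<bar>\<beta> j\<bar>"], simp)
        apply (rule intg[where B=1])
        using pmf_le_1 pmf_nonneg unfolding g_def by (simp add: abs_le_iff) 
      also have "(\<integral>y. indicator Xin y * \<beta> j \<partial>p) = \<alpha> * \<beta> j"
        by (simp add: aeq)
      finally show ?thesis using beta_int[OF j] by (simp add: mult.commute)
    qed
    have "AE y in p. indicator Xin y * (\<beta> j - g j y) = 0"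
    proof (subst integral_nonneg_eq_0_iff_AE[symmetric])
      show "integrable (measure_pmf p) (\<lambda>y. indicator Xin y * (\<beta> j - g j y))"
        by (rule intg[OF bnd])
      show "AE y in p. 0 \<le> indicator Xin y * (\<beta> j - g j y)"
        unfolding AE_measure_pmf_iff using g_le[OF j] by (auto simp: indicator_def)
      show "(\<integral>y. indicator Xin y * (\<beta> j - g j y) \<partial>p) = 0" by (rule int0)
    qed
    then show ?thesis unfolding AE_measure_pmf_iff using x by auto
  qed
  obtain x0 where x0: "x0 \<in> set_pmf p" "x0 \<in> Xin"
  proof -
    have "Xin \<inter> set_pmf p \<noteq> {}"
    proof
      assume "Xin \<inter> set_pmf p = {}"
      then have "measure_pmf.prob p Xin = 0" using measure_Int_set_pmf[of p Xin] by simp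
      then show False using apos aeq by simp
    qed
    then show ?thesis using that by blast
  qed
  define lo where "lo = Min (\<beta> ` {..<M})"
  define hi where "hi = Max (\<beta> ` {..<M})"
  have lohi: "lo \<le> \<beta> i \<and> \<beta> i \<le> hi" if "i < M" for i
    unfolding lo_def hi_def using that by auto
  have lo_in: "lo \<in> \<beta> ` {..<M}" unfolding lo_def using Mpos by (intro Min_in) auto
  have hi_in: "hi \<in> \<beta> ` {..<M}" unfolding hi_def using Mpos by (intro Max_in) auto
  have lo_gt: "lo > 1 / real N" using lo_in A1 unfolding \<beta>_def by auto
  have hi1: "hi \<le> 1"
  proof -
    obtain j where j: "j < M" "hi = \<beta> j" using hi_in by auto
    then show ?thesis using g_eq[OF j(1) x0] pmf_le_1[of "pred j x0" "sx x0"] unfolding g_def by simp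
  qed
  have lo0: "0 \<le> lo" using lo_gt Nr by (smt (verit) divide_nonneg_nonneg of_nat_0_le_iff)
  have lo1: "lo \<le> 1" using lohi[OF Mpos] hi1 by linarith
  define r where "r = (1 - lo) / (real N - 1)"
  have r0: "0 \<le> r" unfolding r_def using lo1 Nr by simp
  have rN: "r \<le> 1 / real N"
  proof -
    have "real N * lo \<ge> 1" using lo_gt Nr by (simp add: field_simps)
    then show ?thesis unfolding r_def using Nr by (simp add: field_simps)
  qed
  define Bsum where "Bsum = (\<Sum>i=K+1..M. real (M choose i) * lo ^ i * (1 - hi) ^ (M - i))"
  define E' where "E' = real (card S - 1) * (real (M choose (K+1)) * r ^ (K+1))"
  define f where "f x = measure_pmf.prob (Q x) {ys. ensolver M S \<tau> (sel x ys) ys = Some (sx x)}" for x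
  have fx: "f x \<ge> Bsum - E'" if x: "x \<in> set_pmf p" "x \<in> Xin" for x
    unfolding f_def Bsum_def E'_def Q_def
  proof (rule per_x[where b = \<beta>])
    show "finite S" by (rule S_fin)
    show "sx x \<in> S" using sx_S x by auto
    show "pmf (pred i x) (sx x) = \<beta> i" if "i < M" for i using g_eq[OF that x] unfolding g_def .
    show "lo \<le> \<beta> i \<and> \<beta> i \<le> hi" if "i < M" for i using lohi[OF that] .
    show "0 \<le> lo" by (rule lo0)
    show "hi \<le> 1" by (rule hi1)
    show "pmf (pred i x) s \<le> r" if "i < M" "s \<in> S" "s \<noteq> sx x" for i s
    proof -
      have "pmf (pred i x) s = (1 - \<beta> i) / (real N - 1)" using A2 that x unfolding \<beta>_def by auto
      also have "\<dots> \<le> r" unfolding r_def using lohi[OF that(1)] Nr by (simp add: divide_right_mono)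
      finally show ?thesis .
    qed
    show "0 \<le> r" by (rule r0)
    show "measure_pmf.prob (pred i x) S = 1" if "i < M" for i
      using sumS[OF that x] g_eq[OF that x] by simp
    show "0 < K" "real M * (1 - \<tau>) = real K" using K by auto
    show "0 < \<tau>" by (rule tau(1))
    show "\<forall>ys. (\<forall>i<M. ys i \<in> S) \<longrightarrow> sel x ys \<in> S \<and> (\<forall>s\<in>S. votes M ys s \<le> votes M ys (sel x ys))"
      using sel_max by blast
  qed
  have f01: "0 \<le> f x" "f x \<le> 1" for x unfolding f_def by auto
  have lhs: "measure_pmf.prob (joint M p pred) {(x, ys). ensolver M S \<tau> (sel x ys) ys = Some (sx x)} = (\<integral>x. f x \<partial>p)"
    unfolding joint_eq f_def by simp
  have "(\<integral>x. f x \<partial>p) \<ge> (\<integral>x. indicator Xin x * (Bsum - E') \<partial>p)"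
  proof (rule integral_mono_AE)
    show "integrable (measure_pmf p) (\<lambda>x. indicator Xin x * (Bsum - E'))"
      by (rule intg[where B="\<bar>Bsum - E'\<bar>"]) simp
    show "integrable (measure_pmf p) f"
      by (rule measure_pmf.integrable_const_bound[where B=1]) (use f01 in auto)
    show "AE x in p. indicator Xin x * (Bsum - E') \<le> f x"
      unfolding AE_measure_pmf_iff using fx f01 by (auto simp: indicator_def)
  qed
  also have "(\<integral>x. indicator Xin x * (Bsum - E') \<partial>p) = \<alpha> * (Bsum - E')"
    by (simp add: aeq)
  finally have main: "measure_pmf.prob (joint M p pred) {(x, ys). ensolver M S \<tau> (sel x ys) ys = Some (sx x)} \<ge> \<alpha> * (Bsum - E')"
    using lhs by simp
  have E'lt: "E' < ood_err_bound M N \<tau>"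
  proof -
    define C where "C = real (M choose (M div 2))"
    have Cpos: "C > 0" unfolding C_def by simp
    have "E' = (real N - 1) * (real (M choose (K+1)) * r ^ (K+1))"
      unfolding E'_def using Nr N_def by (simp add: of_nat_diff)
    also have "\<dots> \<le> (real N - 1) * (C * (1 / real N) ^ (K+1))"
      unfolding C_def using Nr r0 rN
      by (intro mult_left_mono mult_mono power_mono) (auto simp: binomial_maximum)
    also have "\<dots> = ((real N - 1) / real N) * (C * (1 / real N) ^ K)"
      by (simp add: field_simps)
    also have "\<dots> < 1 * (C * (1 / real N) ^ K)"
      using Nr Cpos by (intro mult_strict_right_mono) auto
    also have "\<dots> = ood_err_bound M N \<tau>"
      unfolding ood_err_bound_def C_def K(2) using Nr
      by (simp add: powr_minus powr_realpow power_one_over divide_inverse power_inverse)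
    finally show ?thesis .
  qed
  have "\<alpha> * E' < \<alpha> * ood_err_bound M N \<tau>" by (rule mult_strict_left_mono[OF E'lt apos])
  then have goal: "measure_pmf.prob (joint M p pred) {(x, ys). ensolver M S \<tau> (sel x ys) ys = Some (sx x)}
      > \<alpha> * Bsum - \<alpha> * ood_err_bound M N \<tau>"
    using main by (simp add: right_diff_distrib)
  show ?thesis
    using goal unfolding kK \<alpha>_def Bsum_def lo_def hi_def \<beta>_def .
qed

end
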